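(* Let $\mathbf{t}$ be the Thue-Morse sequence. For every nonnegative integer $n$, $\mathbf{t}$ has an unbordered factor of length $n$ if and only if the base-$2$ representation of $n$ (written starting with the most significant digit, without leading zeroes) is not of the form $1(01^*0)^*10^*1$, i.e., does not belong to the regular language denoted by this regular expression.
   Context: The Thue-Morse sequence is $\mathbf{t} = t(0)t(1)t(2)\cdots = 0110100110010110\cdots$, where $t(n)$ is the sum modulo $2$ of the binary digits of $n$. For an infinite sequence $\mathbf{x}$, a factor of length $n$ is a word $\mathbf{x}[i..i+n-1] = \mathbf{x}[i]\mathbf{x}[i+1]\cdots\mathbf{x}[i+n-1]$ for some $i \geq 0$. A finite word $w$ is bordered if there is a word $x$ with $0 < |x| \leq |w|/2$ such that $w$ both begins and ends with $x$; otherwise $w$ is unbordered. In the regular expression, $^*$ denotes Kleene star and juxtaposition denotes concatenation. *)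

theory Defs
  imports Main "HOL-Library.Sublist"
begin

fun bin :: "nat \<Rightarrow> nat list" where
  "bin n = (if n = 0 then [] else bin (n div 2) @ [n mod 2])"

declare bin.simps [simp del]

definition thue_morse :: "nat \<Rightarrow> nat" where
  "thue_morse n = sum_list (bin n) mod 2"

definition factor :: "(nat \<Rightarrow> 'a) \<Rightarrow> nat \<Rightarrow> nat \<Rightarrow> 'a list" where
  "factor x i n = map x [i..<i+n]"

definition bordered :: "'a list \<Rightarrow> bool" where
  "bordered w \<longleftrightarrow> (\<exists>x. 0 < length x \<and> 2 * length x \<le> length w \<and> prefix x w \<and> suffix x w)"

definition unbordered :: "'a list \<Rightarrow> bool" where
  "unbordered w \<longleftrightarrow> \<not> bordered w"

definition lconc :: "'a list set \<Rightarrow> 'a list set \<Rightarrow> 'a list set" where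
  "lconc A B = {u @ v |u v. u \<in> A \<and> v \<in> B}"

definition lstar :: "'a list set \<Rightarrow> 'a list set" where
  "lstar A = {concat ws |ws. set ws \<subseteq> A}"

text \<open>The regular language 1(01*0)*10*1 over the digits {0,1}.\<close>
definition L_exc :: "nat list set" where
  "L_exc = lconc {[1]}
            (lconc (lstar (lconc {[0]} (lconc (lstar {[1]}) {[0]})))
              (lconc {[1]} (lconc (lstar {[0]}) {[1]})))"

end

theory Submission
  imports Defs
begin


lemma bin_pos: "n > 0 \<Longrightarrow> bin n = bin (n div 2) @ [n mod 2]"
  by (subst bin.simps) simp

lemma tm_even: "thue_morse (2*n) = thue_morse n"
proof (cases "n = 0")
  case False
  then have "bin (2*n) = bin n @ [0]" by (simp add: bin_pos)
  then show ?thesis by (simp add: thue_morse_def)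
qed simp

lemma tm_odd: "thue_morse (2*n+1) = 1 - thue_morse n"
proof -
  have "bin (2*n+1) = bin n @ [1]" by (simp add: bin_pos)
  moreover have "\<And>s::nat. (s + 1) mod 2 = 1 - s mod 2" by presburger
  ultimately show ?thesis by (simp add: thue_morse_def)
qed

lemma tm_le: "thue_morse n \<le> 1"
  by (simp add: thue_morse_def)

definition tb :: "nat \<Rightarrow> bool" where "tb n = (thue_morse n = 1)"

lemma tm_eq_iff: "thue_morse x = thue_morse y \<longleftrightarrow> tb x = tb y"
  using tm_le[of x] tm_le[of y] unfolding tb_def by linarith

lemma tb_even[simp]: "tb (2*n) = tb n"
  by (simp add: tb_def tm_even)

lemma tb_odd[simp]: "tb (Suc (2*n)) = (\<not> tb n)"
  using tm_odd[of n] tm_le[of n] unfolding tb_def by auto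

lemma tb_div: "tb x = (tb (x div 2) \<noteq> odd x)"
proof -
  obtain r where "x = 2 * (x div 2) + r" "r = x mod 2" by simp
  then show ?thesis
    by (cases "even x") (metis add.right_neutral tb_even even_iff_mod_2_eq_zero,
        metis Suc_eq_plus1 odd_iff_mod_2_eq_one tb_odd)
qed

lemma tb_pair: "tb (2*n) \<noteq> tb (Suc (2*n))" by simp

lemma no_three: "\<not> (tb y = tb (y+1) \<and> tb (y+1) = tb (y+2))"
proof (cases "even y")
  case True
  then obtain r where "y = 2*r" by blast
  then show ?thesis by simp
next
  case False
  then obtain r where "y = 2*r+1" by (metis oddE)
  then have "y + 1 = 2*(r+1)" "y+2 = Suc (2*(r+1))" by simp_all
  then show ?thesis by (metis tb_even tb_odd)
qed

lemma alt3_even: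
  assumes "tb q \<noteq> tb (q+1)" "tb (q+1) \<noteq> tb (q+2)" "tb (q+2) \<noteq> tb (q+3)"
  shows "even q"
proof (rule ccontr)
  assume "odd q"
  then obtain r where q: "q = 2*r+1" by (metis oddE)
  have e1: "tb q = (\<not> tb r)" using q by simp
  have e2: "tb (q+1) = tb (r+1)" using q by (metis add_Suc_right mult_Suc_right numeral_2_eq_2 one_add_one tb_even add.commute add_2_eq_Suc' Suc_eq_plus1)
  have e3: "tb (q+2) = (\<not> tb (r+1))"
    using q by (metis Suc_eq_plus1 add_2_eq_Suc' add.commute add_Suc_right mult_Suc_right numeral_2_eq_2 tb_odd)
  have e4: "tb (q+3) = tb (r+2)"
    using q tb_even[of "r+2"] by (simp add: algebra_simps numeral_3_eq_3)
  from assms e1 e2 e3 e4 have "tb r = tb (r+1) \<and> tb (r+1) = tb (r+2)" by auto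
  with no_three show False by blast
qed

lemma ev_alt: assumes "even a" shows "tb a \<noteq> tb (a+1) \<and> tb (a+2) \<noteq> tb (a+3)"
proof -
  obtain r where r: "a = 2*r" using assms by blast
  have "a + 1 = Suc (2*r)" "a + 2 = 2*(r+1)" "a + 3 = Suc (2*(r+1))" using r by simp_all
  then show ?thesis using r by (simp only: tb_even tb_odd) simp
qed

lemma od_alt: assumes "odd a" shows "tb (a+1) \<noteq> tb (a+2)"
proof -
  obtain r where r: "a = 2*r+1" using assms by (metis oddE)
  have "a + 1 = 2*(r+1)" "a + 2 = Suc (2*(r+1))" using r by simp_all
  then show ?thesis by (simp only: tb_even tb_odd) simp
qed

lemma parity4:
  assumes "\<forall>j<4. tb (p+j) = tb (q+j)"
  shows "even p = even q"
proof -
  have e0: "tb p = tb q" using assms[rule_format, of 0] by simp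
  have e1: "tb (p+1) = tb (q+1)" using assms[rule_format, of 1] by simp
  have e2: "tb (p+2) = tb (q+2)" using assms[rule_format, of 2] by simp
  have e3: "tb (p+3) = tb (q+3)" using assms[rule_format, of 3] by simp
  show ?thesis
  proof (rule ccontr)
    assume ne: "even p \<noteq> even q"
    show False
    proof (cases "even p")
      case True
      then have oq: "odd q" using ne by simp
      have h1: "tb p \<noteq> tb (p+1)" "tb (p+2) \<noteq> tb (p+3)" using ev_alt[OF True] by blast+
      have h2: "tb (q+1) \<noteq> tb (q+2)" using od_alt[OF oq] .
      have "even q" by (rule alt3_even) (use h1 h2 e0 e1 e2 e3 in simp_all)
      with oq show False by simp
    next
      case False
      then have eq: "even q" using ne by simp
      have h1: "tb q \<noteq> tb (q+1)" "tb (q+2) \<noteq> tb (q+3)" using ev_alt[OF eq] by blast+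
      have h2: "tb (p+1) \<noteq> tb (p+2)" using od_alt False by blast
      have "even p" by (rule alt3_even) (use h1 h2 e0 e1 e2 e3 in simp_all)
      with False show False by simp
    qed
  qed
qed

definition brd :: "nat \<Rightarrow> nat \<Rightarrow> nat \<Rightarrow> bool" where
  "brd i n k \<longleftrightarrow> (\<forall>j<k. tb (i+j) = tb (i+(n-k)+j))"

lemma brd_parity:
  assumes "brd i n k" "4 \<le> k" "k \<le> n"
  shows "even (n - k)"
proof -
  have "\<forall>j<4. tb (i+j) = tb ((i+(n-k))+j)" using assms unfolding brd_def by auto
  then have "even i = even (i + (n-k))" by (rule parity4)
  then show ?thesis using even_add[of i "n-k"] by blast
qed

lemma brdE:
  assumes "0 < k" "k \<le> n" "n - k = 2*d"
  shows "brd p n k \<longleftrightarrow> (\<forall>y. p div 2 \<le> y \<and> y \<le> (p+k-1) div 2 \<longrightarrow> tb y = tb (y+d))"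
proof
  assume b: "brd p n k"
  have bx: "tb x = tb (x + 2*d)" if "p \<le> x" "x < p + k" for x
  proof -
    have "x - p < k" using that by simp
    then have "tb (p + (x-p)) = tb (p+(n-k)+(x-p))" using b unfolding brd_def by blast
    moreover have "p + (x-p) = x" "p+(n-k)+(x-p) = x + 2*d" using that assms(3) by simp_all
    ultimately show ?thesis by simp
  qed
  show "\<forall>y. p div 2 \<le> y \<and> y \<le> (p+k-1) div 2 \<longrightarrow> tb y = tb (y+d)"
  proof (intro allI impI)
    fix y assume y: "p div 2 \<le> y \<and> y \<le> (p+k-1) div 2"
    have y1: "p \<le> 2*y + 1"
    proof -
      have "p = 2*(p div 2) + p mod 2" by simp
      moreover have "p mod 2 < 2" by simp
      ultimately show ?thesis using y by linarith
    qed
    have y2: "2*y < p + k"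
    proof -
      have "p+k-1 = 2*((p+k-1) div 2) + (p+k-1) mod 2" by simp
      then have "2*((p+k-1) div 2) \<le> p+k-1" by linarith
      then show ?thesis using y assms(1) by linarith
    qed
    have "tb y = tb (y+d)"
    proof (cases "p \<le> 2*y")
      case True
      then have "tb (2*y) = tb (2*y + 2*d)" by (rule bx[OF _ y2])
      then have "tb (2*y) = tb (2*(y+d))" by (simp only: distrib_left)
      then show ?thesis by (simp only: tb_even)
    next
      case False
      then have B: "Suc (2*y) < p+k" using y1 y2 assms(1) by linarith
      have A: "p \<le> Suc (2*y)" using y1 by simp
      have "tb (Suc (2*y)) = tb (Suc (2*y) + 2*d)" by (rule bx[OF A B])
      then have "tb (Suc (2*y)) = tb (Suc (2*(y+d)))" by (simp only: distrib_left add_Suc)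
      then show ?thesis by (simp only: tb_odd) simp
    qed
    then show "tb y = tb (y+d)" .
  qed
next
  assume h: "\<forall>y. p div 2 \<le> y \<and> y \<le> (p+k-1) div 2 \<longrightarrow> tb y = tb (y+d)"
  show "brd p n k" unfolding brd_def
  proof (intro allI impI)
    fix j assume j: "j < k"
    define x where "x = p + j"
    have r1: "p div 2 \<le> x div 2" unfolding x_def by (simp add: div_le_mono)
    have r2: "x div 2 \<le> (p+k-1) div 2" unfolding x_def using j by (simp add: div_le_mono)
    have hh: "tb (x div 2) = tb (x div 2 + d)" using h r1 r2 by blast
    have d1: "(x + 2*d) div 2 = x div 2 + d" by simp
    have d2: "odd (x + 2*d) = odd x" by simp
    have "tb x = tb (x + 2*d)"
      using tb_div[of x] tb_div[of "x+2*d"] hh d1 d2 by simp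
    moreover have "p + (n-k) + j = x + 2*d" unfolding x_def using assms(3) by simp
    ultimately show "tb (p+j) = tb (p + (n-k) + j)" unfolding x_def by metis
  qed
qed

lemma brd_iff_range:
  assumes "0 < j" "j \<le> L"
  shows "brd q L j \<longleftrightarrow> (\<forall>y. q \<le> y \<and> y \<le> q + j - 1 \<longrightarrow> tb y = tb (y + (L - j)))"
proof
  assume "brd q L j"
  then have b: "\<forall>i<j. tb (q+i) = tb (q + (L - j) + i)" unfolding brd_def .
  show "\<forall>y. q \<le> y \<and> y \<le> q + j - 1 \<longrightarrow> tb y = tb (y + (L - j))"
  proof (intro allI impI)
    fix y assume y: "q \<le> y \<and> y \<le> q + j - 1"
    then have "y - q < j" using assms(1) by linarith
    then have "tb (q + (y-q)) = tb (q + (L-j) + (y-q))" using b by blast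
    moreover have "q + (y-q) = y" "q + (L-j) + (y-q) = y + (L-j)" using y by simp_all
    ultimately show "tb y = tb (y + (L - j))" by simp
  qed
next
  assume h: "\<forall>y. q \<le> y \<and> y \<le> q + j - 1 \<longrightarrow> tb y = tb (y + (L - j))"
  show "brd q L j" unfolding brd_def
  proof (intro allI impI)
    fix i assume "i < j"
    then have "tb (q+i) = tb (q+i+(L-j))" using h by auto
    then show "tb (q + i) = tb (q + (L - j) + i)" by (simp add: algebra_simps)
  qed
qed




declare tb_even[simp del] tb_odd[simp del]

lemma brd_corr:
  assumes "0 < k" "k \<le> n" "n - k = 2*d" "0 < j" "j \<le> L" "d = L - j"
    "p div 2 = q" "(p+k-1) div 2 = q + j - 1"
  shows "brd p n k \<longleftrightarrow> brd q L j"
  using brdE[OF assms(1-3), of p] brd_iff_range[OF assms(4,5), of q] assms(6-8) by simp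

lemma brd_a: "0 < j \<Longrightarrow> j \<le> m \<Longrightarrow> brd (2*q) (2*m) (2*j) \<longleftrightarrow> brd q m j"
  by (rule brd_corr[where d="m-j"]) auto

lemma brd_b: "0 < j \<Longrightarrow> j \<le> m+1 \<Longrightarrow> brd (2*q) (2*m+1) (2*j-1) \<longleftrightarrow> brd q (m+1) j"
  by (rule brd_corr[where d="m+1-j"]) auto

lemma brd_c: "0 < j \<Longrightarrow> j \<le> m+1 \<Longrightarrow> brd (2*q+1) (2*m+1) (2*j-1) \<longleftrightarrow> brd q (m+1) j"
  by (rule brd_corr[where d="m+1-j"]) auto

lemma brd_d: "2 \<le> j \<Longrightarrow> j \<le> m+1 \<Longrightarrow> brd (2*q+1) (2*m) (2*j-2) \<longleftrightarrow> brd q (m+1) j"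
  by (rule brd_corr[where d="m+1-j"]) auto

lemma brd1: "1 \<le> n \<Longrightarrow> brd i n 1 \<longleftrightarrow> tb i = tb (i+n-1)"
  unfolding brd_def by simp

lemma all_lt2: "(\<forall>j<2. P j) = (P 0 \<and> P (1::nat))"
  by (auto simp: less_Suc_eq numeral_2_eq_2)
lemma all_lt3: "(\<forall>j<3. P j) = (P 0 \<and> P 1 \<and> P (2::nat))"
  by (auto simp: less_Suc_eq numeral_3_eq_3 numeral_2_eq_2)

lemma brd2: "2 \<le> n \<Longrightarrow> brd i n 2 \<longleftrightarrow> tb i = tb (i+n-2) \<and> tb (i+1) = tb (i+n-1)"
proof -
  assume n: "2 \<le> n"
  have "i + (n-2) + 0 = i+n-2" "i + (n-2) + 1 = i+n-1" "i + 0 = i" using n by simp_all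
  then show ?thesis unfolding brd_def all_lt2 by metis
qed

lemma brd3: "3 \<le> n \<Longrightarrow> brd i n 3 \<longleftrightarrow> tb i = tb (i+n-3) \<and> tb (i+1) = tb (i+n-2) \<and> tb (i+2) = tb (i+n-1)"
proof -
  assume n: "3 \<le> n"
  have "i + (n-3) + 0 = i+n-3" "i + (n-3) + 1 = i+n-2" "i + (n-3) + 2 = i+n-1" "i + 0 = i" using n by simp_all
  then show ?thesis unfolding brd_def all_lt3 by metis
qed




definition Bs :: "nat \<Rightarrow> nat \<Rightarrow> nat set" where
  "Bs i n = {k. 0 < k \<and> k < n \<and> brd i n k}"

lemma odd_big_not:
  assumes "odd (n - k)" "4 \<le> k" "k < n"
  shows "\<not> brd i n k"
  using brd_parity[of i n k] assms by auto

lemma Bs_a: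
  assumes m: "2 \<le> m"
  shows "k \<in> Bs (2*q) (2*m) \<longleftrightarrow> (\<exists>j. k = 2*j \<and> j \<in> Bs q m)
     \<or> (k = 1 \<and> tb q \<noteq> tb (q+m-1))
     \<or> (k = 3 \<and> tb (q+1) = tb q \<and> tb (q+m-1) \<noteq> tb q \<and> tb (q+m-2) \<noteq> tb q)"
proof (cases "even k")
  case True
  then obtain j where k: "k = 2*j" by blast
  have "k \<in> Bs (2*q) (2*m) \<longleftrightarrow> 0 < j \<and> j < m \<and> brd q m j"
    unfolding Bs_def k using brd_a[of j m q] by auto
  moreover have "2*j \<noteq> 1" "2*j \<noteq> 3" by presburger+
  ultimately show ?thesis unfolding k by (auto simp: Bs_def)
next
  case False
  have r: "\<not> (\<exists>j. k = 2*j \<and> j \<in> Bs q m)" using False by auto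
  have "k = 1 \<or> k = 3 \<or> 5 \<le> k" using False by presburger
  then consider "k = 1" | "k = 3" | "5 \<le> k" by blast
  then show ?thesis
  proof cases
    case 1
    have i1: "2*q + 2*m - 1 = Suc (2*(q+m-1))" using m by simp
    have "k \<in> Bs (2*q) (2*m) \<longleftrightarrow> tb (2*q) = tb (2*q + 2*m - 1)"
      unfolding Bs_def 1 using brd1[of "2*m" "2*q"] m by auto
    also have "\<dots> \<longleftrightarrow> tb q \<noteq> tb (q+m-1)" unfolding i1 tb_even tb_odd by blast
    finally show ?thesis using 1 r by simp
  next
    case 2
    have i1: "2*q + 2*m - 3 = Suc (2*(q+m-2))" "2*q + 2*m - 2 = 2*(q+m-1)"
      "2*q+1 = Suc (2*q)" "2*q+2 = 2*(q+1)" "2*q + 2*m - 1 = Suc (2*(q+m-1))" using m by simp_all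
    have "k \<in> Bs (2*q) (2*m) \<longleftrightarrow> tb (2*q) = tb (2*q + 2*m - 3) \<and> tb (2*q+1) = tb (2*q + 2*m - 2)
        \<and> tb (2*q+2) = tb (2*q + 2*m - 1)"
      unfolding Bs_def 2 using brd3[of "2*m" "2*q"] m by auto
    also have "\<dots> \<longleftrightarrow> tb (q+1) = tb q \<and> tb (q+m-1) \<noteq> tb q \<and> tb (q+m-2) \<noteq> tb q"
      unfolding i1 tb_even tb_odd by blast
    moreover have "\<And>j::nat. 2*j \<noteq> 3" by presburger
    ultimately show ?thesis using 2 by simp
  next
    case 3
    have "k \<notin> Bs (2*q) (2*m)"
    proof
      assume "k \<in> Bs (2*q) (2*m)"
      then have kk: "k < 2*m" "brd (2*q) (2*m) k" unfolding Bs_def by auto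
      have "odd (2*m - k)" using False kk(1) by simp
      then show False using odd_big_not[of "2*m" k "2*q"] 3 kk by auto
    qed
    then show ?thesis using 3 r by simp
  qed
qed


lemma Bs_b:
  assumes m: "2 \<le> m"
  shows "k \<in> Bs (2*q) (2*m+1) \<longleftrightarrow> (\<exists>j. k = 2*j-1 \<and> 0 < j \<and> j \<in> Bs q (m+1))
     \<or> (k = 2 \<and> tb (q+m-1) \<noteq> tb q \<and> tb (q+m) \<noteq> tb q)"
proof (cases "even k")
  case False
  then obtain b where "k = 2*b+1" by (rule oddE)
  then obtain j where k: "k = 2*j - 1" "0 < j" by (intro that[of "b+1"]) simp_all
  have "k \<in> Bs (2*q) (2*m+1) \<longleftrightarrow> 0 < j \<and> j < m+1 \<and> brd q (m+1) j"
    unfolding Bs_def k using brd_b[of j m q] k(2) by auto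
  moreover have "(\<exists>j'. k = 2*j'-1 \<and> 0 < j' \<and> j' \<in> Bs q (m+1)) \<longleftrightarrow> j \<in> Bs q (m+1)"
  proof
    assume "\<exists>j'. k = 2*j'-1 \<and> 0 < j' \<and> j' \<in> Bs q (m+1)"
    then obtain j' where jj: "k = 2*j'-1" "0 < j'" "j' \<in> Bs q (m+1)" by blast
    then have "j' = j" using k by simp
    then show "j \<in> Bs q (m+1)" using jj by simp
  qed (use k in blast)
  moreover have "k \<noteq> 2" using False by auto
  ultimately show ?thesis using k(2) by (auto simp: Bs_def)
next
  case True
  have r: "\<not> (\<exists>j. k = 2*j-1 \<and> 0 < j \<and> j \<in> Bs q (m+1))"
  proof
    assume "\<exists>j. k = 2*j-1 \<and> 0 < j \<and> j \<in> Bs q (m+1)"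
    then obtain j where "k = 2*j-1" "0 < j" by blast
    then have "odd k" by (cases j) auto
    then show False using True by simp
  qed
  have "k = 0 \<or> k = 2 \<or> 4 \<le> k" using True by presburger
  then consider "k = 0" | "k = 2" | "4 \<le> k" by blast
  then show ?thesis
  proof cases
    case 1 then show ?thesis using r by (simp add: Bs_def)
  next
    case 2
    have i1: "2*q + (2*m+1) - 2 = Suc (2*(q+m-1))" "2*q+(2*m+1)-1 = 2*(q+m)"
      "2*q+1 = Suc (2*q)" using m by simp_all
    have "k \<in> Bs (2*q) (2*m+1) \<longleftrightarrow> tb (2*q) = tb (2*q + (2*m+1) - 2) \<and> tb (2*q+1) = tb (2*q + (2*m+1) - 1)"
      unfolding Bs_def 2 using brd2[of "2*m+1" "2*q"] m by auto
    also have "\<dots> \<longleftrightarrow> tb (q+m-1) \<noteq> tb q \<and> tb (q+m) \<noteq> tb q"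
      unfolding i1 tb_even tb_odd by blast
    finally show ?thesis using 2 r by blast
  next
    case 3
    have "k \<notin> Bs (2*q) (2*m+1)"
    proof
      assume "k \<in> Bs (2*q) (2*m+1)"
      then have kk: "k < 2*m+1" "brd (2*q) (2*m+1) k" unfolding Bs_def by auto
      have "odd (2*m+1 - k)" using True kk(1) by simp
      then show False using odd_big_not[of "2*m+1" k "2*q"] 3 kk by auto
    qed
    then show ?thesis using 3 r by simp
  qed
qed

lemma Bs_c:
  assumes m: "2 \<le> m"
  shows "k \<in> Bs (2*q+1) (2*m+1) \<longleftrightarrow> (\<exists>j. k = 2*j-1 \<and> 0 < j \<and> j \<in> Bs q (m+1))
     \<or> (k = 2 \<and> tb (q+m) \<noteq> tb q \<and> tb (q+1) = tb q)"
proof (cases "even k")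
  case False
  then obtain b where "k = 2*b+1" by (rule oddE)
  then obtain j where k: "k = 2*j - 1" "0 < j" by (intro that[of "b+1"]) simp_all
  have "k \<in> Bs (2*q+1) (2*m+1) \<longleftrightarrow> 0 < j \<and> j < m+1 \<and> brd q (m+1) j"
    unfolding Bs_def k using brd_c[of j m q] k(2) by auto
  moreover have "(\<exists>j'. k = 2*j'-1 \<and> 0 < j' \<and> j' \<in> Bs q (m+1)) \<longleftrightarrow> j \<in> Bs q (m+1)"
  proof
    assume "\<exists>j'. k = 2*j'-1 \<and> 0 < j' \<and> j' \<in> Bs q (m+1)"
    then obtain j' where jj: "k = 2*j'-1" "0 < j'" "j' \<in> Bs q (m+1)" by blast
    then have "j' = j" using k by simp
    then show "j \<in> Bs q (m+1)" using jj by simp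
  qed (use k in blast)
  moreover have "k \<noteq> 2" using False by auto
  ultimately show ?thesis using k(2) by (auto simp: Bs_def)
next
  case True
  have r: "\<not> (\<exists>j. k = 2*j-1 \<and> 0 < j \<and> j \<in> Bs q (m+1))"
  proof
    assume "\<exists>j. k = 2*j-1 \<and> 0 < j \<and> j \<in> Bs q (m+1)"
    then obtain j where "k = 2*j-1" "0 < j" by blast
    then have "odd k" by (cases j) auto
    then show False using True by simp
  qed
  have "k = 0 \<or> k = 2 \<or> 4 \<le> k" using True by presburger
  then consider "k = 0" | "k = 2" | "4 \<le> k" by blast
  then show ?thesis
  proof cases
    case 1 then show ?thesis using r by (simp add: Bs_def)
  next
    case 2
    have i1: "Suc (2*q) + (2*m+1) - 2 = 2*(q+m)" "Suc (2*q) + (2*m+1)-1 = Suc (2*(q+m))"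
      "2*q+1 = Suc (2*q)" "Suc (2*q) + 1 = 2*(q+1)" using m by simp_all
    have "k \<in> Bs (2*q+1) (2*m+1) \<longleftrightarrow> tb (2*q+1) = tb (2*q+1 + (2*m+1) - 2) \<and> tb (2*q+1+1) = tb (2*q+1 + (2*m+1) - 1)"
      unfolding Bs_def 2 using brd2[of "2*m+1" "2*q+1"] m by auto
    also have "\<dots> \<longleftrightarrow> tb (q+m) \<noteq> tb q \<and> tb (q+1) = tb q"
      unfolding i1 tb_even tb_odd by blast
    finally show ?thesis using 2 r by blast
  next
    case 3
    have "k \<notin> Bs (2*q+1) (2*m+1)"
    proof
      assume "k \<in> Bs (2*q+1) (2*m+1)"
      then have kk: "k < 2*m+1" "brd (2*q+1) (2*m+1) k" unfolding Bs_def by auto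
      have "odd (2*m+1 - k)" using True kk(1) by simp
      then show False using odd_big_not[of "2*m+1" k "2*q+1"] 3 kk by auto
    qed
    then show ?thesis using 3 r by simp
  qed
qed

lemma Bs_d:
  assumes m: "2 \<le> m"
  shows "k \<in> Bs (2*q+1) (2*m) \<longleftrightarrow> (\<exists>j. k = 2*j-2 \<and> 2 \<le> j \<and> j \<in> Bs q (m+1))
     \<or> (k = 1 \<and> tb (q+m) \<noteq> tb q)
     \<or> (k = 3 \<and> tb (q+m-1) \<noteq> tb q \<and> tb (q+1) = tb q \<and> tb (q+m) \<noteq> tb q)"
proof (cases "even k")
  case True
  then obtain j0 where k0: "k = 2*j0" by blast
  define j where "j = j0 + 1"
  have k: "k = 2*j - 2" unfolding j_def k0 by simp
  show ?thesis
  proof (cases "k = 0")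
    case True
    then show ?thesis by (auto simp: Bs_def)
  next
    case False
    then have j2: "2 \<le> j" unfolding j_def k0 by simp
    have "k \<in> Bs (2*q+1) (2*m) \<longleftrightarrow> j < m+1 \<and> brd q (m+1) j"
      unfolding Bs_def k using brd_d[of j m q] j2 by auto
    moreover have "(\<exists>j'. k = 2*j'-2 \<and> 2 \<le> j' \<and> j' \<in> Bs q (m+1)) \<longleftrightarrow> j \<in> Bs q (m+1)"
    proof
      assume "\<exists>j'. k = 2*j'-2 \<and> 2 \<le> j' \<and> j' \<in> Bs q (m+1)"
      then obtain j' where jj: "k = 2*j'-2" "2 \<le> j'" "j' \<in> Bs q (m+1)" by blast
      then have "j' = j" using k j2 by simp
      then show "j \<in> Bs q (m+1)" using jj by simp
    qed (use k j2 in blast)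
    moreover have "k \<noteq> 1" "k \<noteq> 3" using True by auto
    ultimately show ?thesis using j2 by (auto simp: Bs_def)
  qed
next
  case False
  have r: "\<not> (\<exists>j. k = 2*j-2 \<and> 2 \<le> j \<and> j \<in> Bs q (m+1))"
  proof
    assume "\<exists>j. k = 2*j-2 \<and> 2 \<le> j \<and> j \<in> Bs q (m+1)"
    then obtain j where "k = 2*j-2" "2 \<le> j" by blast
    then have "even k" by (cases j) auto
    then show False using False by simp
  qed
  have "k = 1 \<or> k = 3 \<or> 5 \<le> k" using False by presburger
  then consider "k = 1" | "k = 3" | "5 \<le> k" by blast
  then show ?thesis
  proof cases
    case 1
    have i1: "Suc (2*q) + 2*m - 1 = 2*(q+m)" "2*q+1 = Suc (2*q)" using m by simp_all
    have "k \<in> Bs (2*q+1) (2*m) \<longleftrightarrow> tb (2*q+1) = tb (2*q+1 + 2*m - 1)"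
      unfolding Bs_def 1 using brd1[of "2*m" "2*q+1"] m by auto
    also have "\<dots> \<longleftrightarrow> tb (q+m) \<noteq> tb q" unfolding i1 tb_even tb_odd by blast
    finally show ?thesis using 1 r by blast
  next
    case 2
    have i1: "Suc (2*q) + 2*m - 3 = 2*(q+m-1)" "Suc (2*q) + 2*m - 2 = Suc (2*(q+m-1))"
      "Suc (2*q) + 2*m - 1 = 2*(q+m)"
      "2*q+1 = Suc (2*q)" "Suc (2*q) + 1 = 2*(q+1)" "Suc (2*q) + 2 = Suc (2*(q+1))" using m by simp_all
    have "k \<in> Bs (2*q+1) (2*m) \<longleftrightarrow> tb (2*q+1) = tb (2*q+1 + 2*m - 3) \<and> tb (2*q+1+1) = tb (2*q+1 + 2*m - 2)
        \<and> tb (2*q+1+2) = tb (2*q+1 + 2*m - 1)"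
      unfolding Bs_def 2 using brd3[of "2*m" "2*q+1"] m by auto
    also have "\<dots> \<longleftrightarrow> tb (q+m-1) \<noteq> tb q \<and> tb (q+1) = tb q \<and> tb (q+m) \<noteq> tb q"
      unfolding i1 tb_even tb_odd by blast
    finally have "k \<in> Bs (2*q+1) (2*m) \<longleftrightarrow> tb (q+m-1) \<noteq> tb q \<and> tb (q+1) = tb q \<and> tb (q+m) \<noteq> tb q" .
    moreover have "\<And>j::nat. 2*j-2 \<noteq> 3" by presburger
    ultimately show ?thesis using 2 by simp
  next
    case 3
    have "k \<notin> Bs (2*q+1) (2*m)"
    proof
      assume "k \<in> Bs (2*q+1) (2*m)"
      then have kk: "k < 2*m" "brd (2*q+1) (2*m) k" unfolding Bs_def by auto
      have "odd (2*m - k)" using False kk(1) by simp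
      then show False using odd_big_not[of "2*m" k "2*q+1"] 3 kk by auto
    qed
    then show ?thesis using 3 r by simp
  qed
qed




datatype cat = CN | CO | CX
type_synonym stt = "cat \<times> bool \<times> bool \<times> bool \<times> bool"
fun fa :: "stt \<Rightarrow> stt" where
 "fa (c,a0,a1,b1,b0) = ((if c = CN \<and> \<not>(a1 = a0 \<and> b1 \<noteq> a0) then CO else CX), a0, \<not>a0, b0, \<not>b0)"
fun fb :: "stt \<Rightarrow> stt" where
 "fb (c,a0,a1,b1,b0) = ((if c = CN \<and> b1 = a0 then CN else if c = CO then CO else CX), a0, \<not>a0, \<not>b1, b0)"
fun fc :: "stt \<Rightarrow> stt" where
 "fc (c,a0,a1,b1,b0) = ((if c = CN \<and> a1 \<noteq> a0 then CN else if c = CO then CO else CX), \<not>a0, a1, b0, \<not>b0)"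
fun fd :: "stt \<Rightarrow> stt" where
 "fd (c,a0,a1,b1,b0) = ((if c = CO then CN else if c = CN \<and> \<not>(b1 \<noteq> a0 \<and> a1 = a0) then CO else CX), \<not>a0, a1, \<not>b1, b0)"

definition catB :: "nat set \<Rightarrow> cat" where
  "catB S = (if S = {} then CN else if S = {1} then CO else CX)"

definition st :: "nat \<Rightarrow> nat \<Rightarrow> stt" where
  "st i n = (catB (Bs i n), tb i, tb (i+1), tb (i+n-2), tb (i+n-1))"

lemma catB_X: "k \<in> S \<Longrightarrow> k \<noteq> 1 \<Longrightarrow> catB S = CX"
  unfolding catB_def by auto

lemma catB_N: "catB {} = CN" and catB_O: "catB {1} = CO"
  unfolding catB_def by auto

lemma Bs_pos: "k \<in> Bs i n \<Longrightarrow> 0 < k" unfolding Bs_def by auto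

lemma Bs_other: "S \<noteq> {} \<Longrightarrow> S \<noteq> {1} \<Longrightarrow> S = Bs i n \<Longrightarrow> \<exists>j\<in>S. 2 \<le> j"
proof (rule ccontr)
  assume ne: "S \<noteq> {}" "S \<noteq> {1}" "S = Bs i n" and c: "\<not> (\<exists>j\<in>S. 2 \<le> j)"
  have "\<And>j. j \<in> S \<Longrightarrow> j = 1" using c Bs_pos ne(3) by fastforce
  then have "S = {1}" using ne(1) by blast
  then show False using ne(2) by simp
qed

lemma one_Bs: "2 \<le> L \<Longrightarrow> 1 \<in> Bs q L \<longleftrightarrow> tb q = tb (q+L-1)"
  unfolding Bs_def using brd1[of L q] by auto

lemma st_a:
  assumes m: "2 \<le> m"
  shows "st (2*q) (2*m) = fa (st q m)"
proof -
  define a0 a1 b1 b0 where "a0 = tb q" "a1 = tb (q+1)" "b1 = tb (q+m-2)" "b0 = tb (q+m-1)"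
  have i1: "2*q+1 = Suc (2*q)" "2*q + 2*m - 2 = 2*(q+m-1)" "2*q+2*m-1 = Suc (2*(q+m-1))" using m by simp_all
  have L: "tb (2*q) = a0" "tb (2*q+1) = (\<not> a0)" "tb (2*q + 2*m - 2) = b0" "tb (2*q + 2*m - 1) = (\<not> b0)"
    unfolding i1 a0_a1_b1_b0_def tb_even tb_odd by simp_all
  have C: "catB (Bs (2*q) (2*m)) = (if catB (Bs q m) = CN \<and> \<not>(a1 = a0 \<and> b1 \<noteq> a0) then CO else CX)"
  proof (cases "Bs q m = {}")
    case True
    then have "b0 \<noteq> a0" using one_Bs[of m q] m unfolding a0_a1_b1_b0_def by auto
    have "Bs (2*q) (2*m) = (if a1 = a0 \<and> b1 \<noteq> a0 then {1,3} else {1})"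
    proof (rule set_eqI)
      fix k
      have "k \<in> Bs (2*q) (2*m) \<longleftrightarrow> k = 1 \<and> b0 \<noteq> a0 \<or> (k = 3 \<and> a1 = a0 \<and> b0 \<noteq> a0 \<and> b1 \<noteq> a0)"
        using Bs_a[OF m, of k q, folded a0_a1_b1_b0_def] True by (simp add: eq_commute)
      then show "k \<in> Bs (2*q) (2*m) \<longleftrightarrow> k \<in> (if a1 = a0 \<and> b1 \<noteq> a0 then {1,3} else {1})"
        using \<open>b0 \<noteq> a0\<close> by auto
    qed
    then show ?thesis using True by (simp add: catB_def)
  next
    case False
    then obtain j where j: "j \<in> Bs q m" by blast
    then have "2*j \<in> Bs (2*q) (2*m)" using Bs_a[OF m, of "2*j" q] by auto
    moreover have "2*j \<noteq> 1" by presburger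
    ultimately have "catB (Bs (2*q) (2*m)) = CX" by (rule catB_X)
    moreover have "catB (Bs q m) \<noteq> CN" using False by (simp add: catB_def)
    ultimately show ?thesis by simp
  qed
  show ?thesis unfolding st_def a0_a1_b1_b0_def[symmetric] L C fa.simps by simp
qed


lemma st_b:
  assumes m: "2 \<le> m"
  shows "st (2*q) (2*m+1) = fb (st q (m+1))"
proof -
  define a0 a1 b1 b0 where "a0 = tb q" "a1 = tb (q+1)" "b1 = tb (q+(m+1)-2)" "b0 = tb (q+(m+1)-1)"
  have e: "tb (q+m-1) = b1" "tb (q+m) = b0" using m unfolding a0_a1_b1_b0_def by simp_all
  have i1: "2*q+1 = Suc (2*q)" "2*q + (2*m+1) - 2 = Suc (2*(q+m-1))" "2*q+(2*m+1)-1 = 2*(q+m)" using m by simp_all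
  have L: "tb (2*q) = a0" "tb (2*q+1) = (\<not> a0)" "tb (2*q + (2*m+1) - 2) = (\<not> b1)" "tb (2*q + (2*m+1) - 1) = b0"
    unfolding i1 tb_even tb_odd e a0_a1_b1_b0_def(1) by simp_all
  have B: "k \<in> Bs (2*q) (2*m+1) \<longleftrightarrow> (\<exists>j. k = 2*j-1 \<and> 0 < j \<and> j \<in> Bs q (m+1)) \<or> (k = 2 \<and> b1 \<noteq> a0 \<and> b0 \<noteq> a0)" for k
    using Bs_b[OF m, of k q, unfolded e, folded a0_a1_b1_b0_def(1)] .
  have one: "1 \<in> Bs q (m+1) \<longleftrightarrow> a0 = b0" using one_Bs[of "m+1" q] m unfolding a0_a1_b1_b0_def by simp
  have C: "catB (Bs (2*q) (2*m+1)) = (if catB (Bs q (m+1)) = CN \<and> b1 = a0 then CN else if catB (Bs q (m+1)) = CO then CO else CX)"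
  proof (cases "Bs q (m+1) = {}")
    case True
    then have "b0 \<noteq> a0" using one by auto
    have "Bs (2*q) (2*m+1) = (if b1 \<noteq> a0 then {2} else {})"
    proof (rule set_eqI)
      fix k show "k \<in> Bs (2*q) (2*m+1) \<longleftrightarrow> k \<in> (if b1 \<noteq> a0 then {2} else {})"
        using B[of k] True \<open>b0 \<noteq> a0\<close> by auto
    qed
    then show ?thesis using True by (simp add: catB_def)
  next
    case F: False
    show ?thesis
    proof (cases "Bs q (m+1) = {1}")
      case True
      then have "b0 = a0" using one by auto
      have "Bs (2*q) (2*m+1) = {1}"
      proof (rule set_eqI)
        fix k show "k \<in> Bs (2*q) (2*m+1) \<longleftrightarrow> k \<in> {1}"
          using B[of k] True \<open>b0 = a0\<close> by auto
      qed
      then show ?thesis using True by (simp add: catB_def)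
    next
      case False
      then obtain j where j: "j \<in> Bs q (m+1)" "2 \<le> j" using Bs_other[OF F False refl] by blast
      then have "2*j-1 \<in> Bs (2*q) (2*m+1)" using B[of "2*j-1"] by auto
      moreover have "2*j-1 \<noteq> 1" using j by simp
      ultimately have "catB (Bs (2*q) (2*m+1)) = CX" by (rule catB_X)
      moreover have "catB (Bs q (m+1)) = CX" using F False by (simp add: catB_def)
      ultimately show ?thesis by simp
    qed
  qed
  show ?thesis unfolding st_def a0_a1_b1_b0_def[symmetric] L C fb.simps by simp
qed

lemma st_c:
  assumes m: "2 \<le> m"
  shows "st (2*q+1) (2*m+1) = fc (st q (m+1))"
proof -
  define a0 a1 b1 b0 where "a0 = tb q" "a1 = tb (q+1)" "b1 = tb (q+(m+1)-2)" "b0 = tb (q+(m+1)-1)"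
  have e: "tb (q+m-1) = b1" "tb (q+m) = b0" using m unfolding a0_a1_b1_b0_def by simp_all
  have i1: "2*q+1 = Suc (2*q)" "Suc (2*q) + 1 = 2*(q+1)" "Suc (2*q) + (2*m+1) - 2 = 2*(q+m)"
     "Suc (2*q)+(2*m+1)-1 = Suc (2*(q+m))" using m by simp_all
  have L: "tb (2*q+1) = (\<not> a0)" "tb (2*q+1+1) = a1" "tb (2*q+1 + (2*m+1) - 2) = b0" "tb (2*q+1 + (2*m+1) - 1) = (\<not> b0)"
    unfolding i1 tb_even tb_odd e a0_a1_b1_b0_def(1,2) by simp_all
  have B: "k \<in> Bs (2*q+1) (2*m+1) \<longleftrightarrow> (\<exists>j. k = 2*j-1 \<and> 0 < j \<and> j \<in> Bs q (m+1)) \<or> (k = 2 \<and> b0 \<noteq> a0 \<and> a1 = a0)" for k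
    using Bs_c[OF m, of k q, unfolded e, folded a0_a1_b1_b0_def(1,2)] .
  have one: "1 \<in> Bs q (m+1) \<longleftrightarrow> a0 = b0" using one_Bs[of "m+1" q] m unfolding a0_a1_b1_b0_def by simp
  have C: "catB (Bs (2*q+1) (2*m+1)) = (if catB (Bs q (m+1)) = CN \<and> a1 \<noteq> a0 then CN else if catB (Bs q (m+1)) = CO then CO else CX)"
  proof (cases "Bs q (m+1) = {}")
    case True
    then have "b0 \<noteq> a0" using one by auto
    have "Bs (2*q+1) (2*m+1) = (if a1 = a0 then {2} else {})"
    proof (rule set_eqI)
      fix k show "k \<in> Bs (2*q+1) (2*m+1) \<longleftrightarrow> k \<in> (if a1 = a0 then {2} else {})"
        using B[of k] True \<open>b0 \<noteq> a0\<close> by auto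
    qed
    then show ?thesis using True by (simp add: catB_def)
  next
    case F: False
    show ?thesis
    proof (cases "Bs q (m+1) = {1}")
      case True
      then have "b0 = a0" using one by auto
      have "Bs (2*q+1) (2*m+1) = {1}"
      proof (rule set_eqI)
        fix k show "k \<in> Bs (2*q+1) (2*m+1) \<longleftrightarrow> k \<in> {1}"
          using B[of k] True \<open>b0 = a0\<close> by auto
      qed
      then show ?thesis using True by (simp add: catB_def)
    next
      case False
      then obtain j where j: "j \<in> Bs q (m+1)" "2 \<le> j" using Bs_other[OF F False refl] by blast
      then have "2*j-1 \<in> Bs (2*q+1) (2*m+1)" using B[of "2*j-1"] by auto
      moreover have "2*j-1 \<noteq> 1" using j by simp
      ultimately have "catB (Bs (2*q+1) (2*m+1)) = CX" by (rule catB_X)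
      moreover have "catB (Bs q (m+1)) = CX" using F False by (simp add: catB_def)
      ultimately show ?thesis by simp
    qed
  qed
  show ?thesis unfolding st_def a0_a1_b1_b0_def[symmetric] L C fc.simps by simp
qed

lemma st_d:
  assumes m: "2 \<le> m"
  shows "st (2*q+1) (2*m) = fd (st q (m+1))"
proof -
  define a0 a1 b1 b0 where "a0 = tb q" "a1 = tb (q+1)" "b1 = tb (q+(m+1)-2)" "b0 = tb (q+(m+1)-1)"
  have e: "tb (q+m-1) = b1" "tb (q+m) = b0" using m unfolding a0_a1_b1_b0_def by simp_all
  have i1: "2*q+1 = Suc (2*q)" "Suc (2*q) + 1 = 2*(q+1)" "Suc (2*q) + 2*m - 2 = Suc (2*(q+m-1))"
     "Suc (2*q)+2*m-1 = 2*(q+m)" using m by simp_all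
  have L: "tb (2*q+1) = (\<not> a0)" "tb (2*q+1+1) = a1" "tb (2*q+1 + 2*m - 2) = (\<not> b1)" "tb (2*q+1 + 2*m - 1) = b0"
    unfolding i1 tb_even tb_odd e a0_a1_b1_b0_def(1,2) by simp_all
  have B: "k \<in> Bs (2*q+1) (2*m) \<longleftrightarrow> (\<exists>j. k = 2*j-2 \<and> 2 \<le> j \<and> j \<in> Bs q (m+1))
     \<or> (k = 1 \<and> b0 \<noteq> a0) \<or> (k = 3 \<and> b1 \<noteq> a0 \<and> a1 = a0 \<and> b0 \<noteq> a0)" for k
    using Bs_d[OF m, of k q, unfolded e, folded a0_a1_b1_b0_def(1,2)] .
  have one: "1 \<in> Bs q (m+1) \<longleftrightarrow> a0 = b0" using one_Bs[of "m+1" q] m unfolding a0_a1_b1_b0_def by simp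
  have C: "catB (Bs (2*q+1) (2*m)) = (if catB (Bs q (m+1)) = CO then CN else if catB (Bs q (m+1)) = CN \<and> \<not>(b1 \<noteq> a0 \<and> a1 = a0) then CO else CX)"
  proof (cases "Bs q (m+1) = {}")
    case True
    then have "b0 \<noteq> a0" using one by auto
    have "Bs (2*q+1) (2*m) = (if b1 \<noteq> a0 \<and> a1 = a0 then {1,3} else {1})"
    proof (rule set_eqI)
      fix k show "k \<in> Bs (2*q+1) (2*m) \<longleftrightarrow> k \<in> (if b1 \<noteq> a0 \<and> a1 = a0 then {1,3} else {1})"
        using B[of k] True \<open>b0 \<noteq> a0\<close> by auto
    qed
    then show ?thesis using True by (simp add: catB_def)
  next
    case F: False
    show ?thesis
    proof (cases "Bs q (m+1) = {1}")
      case True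
      then have "b0 = a0" using one by auto
      have "Bs (2*q+1) (2*m) = {}"
      proof (rule set_eqI)
        fix k show "k \<in> Bs (2*q+1) (2*m) \<longleftrightarrow> k \<in> {}"
          using B[of k] True \<open>b0 = a0\<close> by auto
      qed
      then show ?thesis using True by (simp add: catB_def)
    next
      case False
      then obtain j where j: "j \<in> Bs q (m+1)" "2 \<le> j" using Bs_other[OF F False refl] by blast
      then have "2*j-2 \<in> Bs (2*q+1) (2*m)" using B[of "2*j-2"] by auto
      moreover have "2*j-2 \<noteq> 1" using j by presburger
      ultimately have "catB (Bs (2*q+1) (2*m)) = CX" by (rule catB_X)
      moreover have "catB (Bs q (m+1)) = CX" using F False by (simp add: catB_def)
      ultimately show ?thesis by simp
    qed
  qed
  show ?thesis unfolding st_def a0_a1_b1_b0_def[symmetric] L C fd.simps by simp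
qed




datatype dst = D0 | DA | DB | DC | DF | DZ
fun dstep :: "dst \<Rightarrow> nat \<Rightarrow> dst" where
 "dstep D0 d = (if d = 1 then DA else DZ)"
| "dstep DA d = (if d = 0 then DB else if d = 1 then DC else DZ)"
| "dstep DB d = (if d = 0 then DA else if d = 1 then DB else DZ)"
| "dstep DC d = (if d = 0 then DC else if d = 1 then DF else DZ)"
| "dstep DF d = DZ"
| "dstep DZ d = DZ"

definition drun :: "nat list \<Rightarrow> dst" where "drun w = foldl dstep D0 w"

definition XL :: "nat list set" where "XL = lconc {[0]} (lconc (lstar {[1]}) {[0]})"
definition PA :: "nat list set" where "PA = lconc {[1]} (lstar XL)"

lemma L_exc_alt: "L_exc = {[1] @ (cw @ ([1] @ (zw @ [1]))) | cw zw. cw \<in> lstar XL \<and> zw \<in> lstar {[0]}}"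
  unfolding L_exc_def XL_def lconc_def by blast

lemma fold_ones: "set os \<subseteq> {[1]} \<Longrightarrow> foldl dstep DB (concat os) = DB"
  by (induction os) auto

lemma fold_zeros: "set os \<subseteq> {[0]} \<Longrightarrow> foldl dstep DC (concat os) = DC"
  by (induction os) auto

lemma fold_X: "set ws \<subseteq> XL \<Longrightarrow> foldl dstep DA (concat ws) = DA"
proof (induction ws)
  case Nil then show ?case by simp
next
  case (Cons x ws)
  then have "x \<in> XL" by simp
  then obtain os where x: "x = [0] @ (concat os @ [0])" "set os \<subseteq> {[1]}"
    unfolding XL_def lconc_def lstar_def by blast
  have "foldl dstep DA x = DA" unfolding x(1) using fold_ones[OF x(2)] by simp
  then show ?case using Cons by simp
qed

lemma L_to_run: "w \<in> L_exc \<Longrightarrow> drun w = DF"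
proof -
  assume "w \<in> L_exc"
  then obtain cw zw where w: "w = [1] @ (cw @ ([1] @ (zw @ [1])))" "cw \<in> lstar XL" "zw \<in> lstar {[0]}"
    unfolding L_exc_alt by blast
  obtain ws where ws: "cw = concat ws" "set ws \<subseteq> XL" using w(2) unfolding lstar_def by blast
  obtain zs where zs: "zw = concat zs" "set zs \<subseteq> {[0]}" using w(3) unfolding lstar_def by blast
  show ?thesis unfolding drun_def w(1) ws(1) zs(1)
    using fold_X[OF ws(2)] fold_zeros[OF zs(2)] by simp
qed

lemma drun_snoc: "drun (w @ [d]) = dstep (drun w) d"
  unfolding drun_def by simp

lemma dstep_not0: "dstep q d \<noteq> D0"
  by (cases q) auto

lemma drun_D0: "drun w = D0 \<Longrightarrow> w = []"
  by (cases w rule: rev_cases) (auto simp: drun_snoc dstep_not0)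

lemma PA_snoc: "u \<in> PA \<Longrightarrow> set os \<subseteq> {[1]} \<Longrightarrow> u @ [0] @ concat os @ [0] \<in> PA"
proof -
  assume u: "u \<in> PA" and os: "set os \<subseteq> {[1]}"
  obtain ws where ws: "u = [1] @ concat ws" "set ws \<subseteq> XL" using u unfolding PA_def lconc_def lstar_def by blast
  have x: "[0] @ concat os @ [0] \<in> XL" unfolding XL_def lconc_def lstar_def using os by blast
  have "u @ [0] @ concat os @ [0] = [1] @ concat (ws @ [[0] @ concat os @ [0]])" using ws by simp
  moreover have "set (ws @ [[0] @ concat os @ [0]]) \<subseteq> XL" using ws x by simp
  ultimately show ?thesis unfolding PA_def lconc_def lstar_def by blast
qed

lemma run_inv:
  "(drun w = DA \<longrightarrow> w \<in> PA)
   \<and> (drun w = DB \<longrightarrow> (\<exists>u os. u \<in> PA \<and> set os \<subseteq> {[1]} \<and> w = u @ [0] @ concat os))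
   \<and> (drun w = DC \<longrightarrow> (\<exists>u zs. u \<in> PA \<and> set zs \<subseteq> {[0]} \<and> w = u @ [1] @ concat zs))
   \<and> (drun w = DF \<longrightarrow> w \<in> L_exc)"
proof (induction w rule: rev_induct)
  case Nil then show ?case by (simp add: drun_def)
next
  case (snoc d w)
  note IH = snoc
  show ?case
  proof (cases "drun w")
    case D0
    then have "w = []" by (rule drun_D0)
    moreover have "[1] \<in> PA" unfolding PA_def lconc_def lstar_def
      by (rule CollectI, rule exI[of _ "[1]"], rule exI[of _ "[]"]) (auto intro: exI[of _ "[]"])
    ultimately show ?thesis using D0 by (auto simp: drun_def split: if_splits)
  next
    case DA
    then have u: "w \<in> PA" using IH by blast
    have B: "\<exists>u os. u \<in> PA \<and> set os \<subseteq> {[1]} \<and> w @ [0] = u @ [0] @ concat os"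
      using u by (intro exI[of _ w] exI[of _ "[]"]) simp
    have C: "\<exists>u zs. u \<in> PA \<and> set zs \<subseteq> {[0]} \<and> w @ [1] = u @ [1] @ concat zs"
      using u by (intro exI[of _ w] exI[of _ "[]"]) simp
    show ?thesis using DA B C by (auto simp: drun_snoc split: if_splits)
  next
    case DB
    then obtain u os where u: "u \<in> PA" "set os \<subseteq> {[1]}" "w = u @ [0] @ concat os" using IH by blast
    have A: "w @ [0] \<in> PA" using PA_snoc[OF u(1,2)] u(3) by simp
    have B: "\<exists>u' os'. u' \<in> PA \<and> set os' \<subseteq> {[1]} \<and> w @ [1] = u' @ [0] @ concat os'"
      using u by (intro exI[of _ u] exI[of _ "os @ [[1]]"]) simp
    show ?thesis using DB A B by (simp add: drun_snoc split: if_splits)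
  next
    case DC
    then obtain u zs where u: "u \<in> PA" "set zs \<subseteq> {[0]}" "w = u @ [1] @ concat zs" using IH by blast
    obtain ws where ws: "u = [1] @ concat ws" "set ws \<subseteq> XL" using u(1) unfolding PA_def lconc_def lstar_def by blast
    have A: "w @ [1] \<in> L_exc" unfolding L_exc_alt
    proof (rule CollectI, intro exI conjI)
      show "w @ [1] = [1] @ (concat ws @ ([1] @ (concat zs @ [1])))" using u(3) ws(1) by simp
      show "concat ws \<in> lstar XL" unfolding lstar_def using ws(2) by blast
      show "concat zs \<in> lstar {[0]}" unfolding lstar_def using u(2) by blast
    qed
    have B: "\<exists>u' zs'. u' \<in> PA \<and> set zs' \<subseteq> {[0]} \<and> w @ [0] = u' @ [1] @ concat zs'"
      using u by (intro exI[of _ u] exI[of _ "zs @ [[0]]"]) simp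
    show ?thesis using DC A B by (simp add: drun_snoc split: if_splits)
  next
    case DF then show ?thesis by (auto simp: drun_snoc)
  next
    case DZ then show ?thesis by (auto simp: drun_snoc)
  qed
qed

lemma L_iff_run: "w \<in> L_exc \<longleftrightarrow> drun w = DF"
  using L_to_run run_inv by blast




definition fl :: "stt set \<Rightarrow> stt set" where "fl A = {s\<in>A. fst s \<noteq> CX}"
fun tr0 :: "stt set \<times> stt set \<times> stt set \<Rightarrow> stt set \<times> stt set \<times> stt set" where
 "tr0 (A,B,C) = (fl (fa ` A \<union> fd ` B), fl (fb ` B \<union> fc ` B), fl (fa ` B \<union> fd ` C))"
fun tr1 :: "stt set \<times> stt set \<times> stt set \<Rightarrow> stt set \<times> stt set \<times> stt set" where
 "tr1 (A,B,C) = (fl (fb ` B \<union> fc ` B), fl (fa ` B \<union> fd ` C), fl (fb ` C \<union> fc ` C))"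

definition RR :: "((stt set \<times> stt set \<times> stt set) \<times> dst) list" where
 "RR = [((set [(CN,False,True,False,True),(CN,True,False,True,False),(CO,False,False,False,False),(CO,True,True,True,True)], set [(CN,False,False,False,True),(CN,False,True,True,True),(CN,True,False,False,False),(CN,True,True,True,False),(CO,False,True,True,False),(CO,True,False,False,True)], set [(CN,False,False,True,True),(CN,True,True,False,False),(CO,False,False,True,False),(CO,False,True,False,False),(CO,False,True,True,False),(CO,True,False,False,True),(CO,True,False,True,True),(CO,True,True,False,True)]), DB),
 ((set [(CN,False,False,False,True),(CN,False,False,True,True),(CN,False,True,True,True),(CN,True,False,False,False),(CN,True,True,False,False),(CN,True,True,True,False),(CO,False,True,True,False),(CO,True,False,False,True)], set [(CO,False,False,True,False),(CO,False,True,False,False),(CO,False,True,True,False),(CO,True,False,False,True),(CO,True,False,True,True),(CO,True,True,False,True)], set [(CN,False,False,False,True),(CN,False,True,True,True),(CN,True,False,False,False),(CN,True,True,True,False),(CO,False,False,True,False),(CO,False,True,False,False),(CO,True,False,True,True),(CO,True,True,False,True)]), DC),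
 ((set [(CN,False,False,False,True),(CN,False,True,True,True),(CN,True,False,False,False),(CN,True,True,True,False),(CO,False,True,True,False),(CO,True,False,False,True)], set [(CN,False,False,True,True),(CN,True,True,False,False),(CO,False,False,True,False),(CO,False,True,False,False),(CO,False,True,True,False),(CO,True,False,False,True),(CO,True,False,True,True),(CO,True,True,False,True)], set [(CN,False,False,False,True),(CN,False,True,True,True),(CN,True,False,False,False),(CN,True,True,True,False),(CO,False,False,True,False),(CO,False,True,False,False),(CO,True,False,True,True),(CO,True,True,False,True)]), DC),
 ((set [(CN,False,False,False,True),(CN,False,False,True,True),(CN,False,True,True,True),(CN,True,False,False,False),(CN,True,True,False,False),(CN,True,True,True,False),(CO,False,False,True,False),(CO,False,True,False,False),(CO,False,True,True,False),(CO,True,False,False,True),(CO,True,False,True,True),(CO,True,True,False,True)], set [(CN,False,False,False,True),(CN,False,True,True,True),(CN,True,False,False,False),(CN,True,True,True,False),(CO,False,False,True,False),(CO,False,True,False,False),(CO,False,True,True,False),(CO,True,False,False,True),(CO,True,False,True,True),(CO,True,True,False,True)], set [(CN,False,False,False,True),(CN,False,False,True,True),(CN,False,True,True,True),(CN,True,False,False,False),(CN,True,True,False,False),(CN,True,True,True,False),(CO,False,True,True,False),(CO,True,False,False,True)]), DA),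
 ((set [(CN,False,False,False,True),(CN,False,False,True,True),(CN,False,True,True,True),(CN,True,False,False,False),(CN,True,True,False,False),(CN,True,True,True,False),(CO,False,False,True,False),(CO,False,True,False,False),(CO,False,True,True,False),(CO,True,False,False,True),(CO,True,False,True,True),(CO,True,True,False,True)], set [(CN,False,False,False,True),(CN,False,True,True,True),(CN,True,False,False,False),(CN,True,True,True,False),(CO,False,False,True,False),(CO,False,True,False,False),(CO,False,True,True,False),(CO,True,False,False,True),(CO,True,False,True,True),(CO,True,True,False,True)], set [(CN,False,False,False,True),(CN,False,False,True,True),(CN,False,True,True,True),(CN,True,False,False,False),(CN,True,True,False,False),(CN,True,True,True,False),(CO,False,False,True,False),(CO,False,True,False,False),(CO,False,True,True,False),(CO,True,False,False,True),(CO,True,False,True,True),(CO,True,True,False,True)]), DZ),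
 ((set [(CN,False,False,False,True),(CN,False,False,True,True),(CN,False,True,True,True),(CN,True,False,False,False),(CN,True,True,False,False),(CN,True,True,True,False),(CO,False,False,True,False),(CO,False,True,False,False),(CO,False,True,True,False),(CO,True,False,False,True),(CO,True,False,True,True),(CO,True,True,False,True)], set [(CN,False,False,False,True),(CN,False,True,True,True),(CN,True,False,False,False),(CN,True,True,True,False),(CO,False,False,True,False),(CO,False,True,False,False),(CO,False,True,True,False),(CO,True,False,False,True),(CO,True,False,True,True),(CO,True,True,False,True)], set [(CN,False,False,True,True),(CN,True,True,False,False),(CO,False,False,True,False),(CO,False,True,False,False),(CO,False,True,True,False),(CO,True,False,False,True),(CO,True,False,True,True),(CO,True,True,False,True)]), DB),
 ((set [(CN,False,False,False,True),(CN,False,True,True,True),(CN,True,False,False,False),(CN,True,True,True,False),(CO,False,False,True,False),(CO,False,True,False,False),(CO,False,True,True,False),(CO,True,False,False,True),(CO,True,False,True,True),(CO,True,True,False,True)], set [(CN,False,False,False,True),(CN,False,False,True,True),(CN,False,True,True,True),(CN,True,False,False,False),(CN,True,True,False,False),(CN,True,True,True,False),(CO,False,True,True,False),(CO,True,False,False,True)], set [(CO,False,False,True,False),(CO,False,True,False,False),(CO,False,True,True,False),(CO,True,False,False,True),(CO,True,False,True,True),(CO,True,True,False,True)]), DB),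
 ((set [(CN,False,False,False,True),(CN,False,True,True,True),(CN,True,False,False,False),(CN,True,True,True,False),(CO,False,False,True,False),(CO,False,True,False,False),(CO,False,True,True,False),(CO,True,False,False,True),(CO,True,False,True,True),(CO,True,True,False,True)], set [(CN,False,False,False,True),(CN,False,False,True,True),(CN,False,True,True,True),(CN,True,False,False,False),(CN,True,True,False,False),(CN,True,True,True,False),(CO,False,False,True,False),(CO,False,True,False,False),(CO,False,True,True,False),(CO,True,False,False,True),(CO,True,False,True,True),(CO,True,True,False,True)], set [(CN,False,False,False,True),(CN,False,True,True,True),(CN,True,False,False,False),(CN,True,True,True,False),(CO,False,False,True,False),(CO,False,True,False,False),(CO,False,True,True,False),(CO,True,False,False,True),(CO,True,False,True,True),(CO,True,True,False,True)]), DZ),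
 ((set [(CN,False,False,False,True),(CN,False,True,True,True),(CN,True,False,False,False),(CN,True,True,True,False),(CO,False,False,True,False),(CO,False,True,False,False),(CO,False,True,True,False),(CO,True,False,False,True),(CO,True,False,True,True),(CO,True,True,False,True)], set [(CN,False,False,True,True),(CN,True,True,False,False),(CO,False,False,True,False),(CO,False,True,False,False),(CO,False,True,True,False),(CO,True,False,False,True),(CO,True,False,True,True),(CO,True,True,False,True)], set [(CN,False,False,False,True),(CN,False,True,True,True),(CN,True,False,False,False),(CN,True,True,True,False),(CO,False,False,True,False),(CO,False,True,False,False),(CO,True,False,True,True),(CO,True,True,False,True)]), DC),
 ((set [(CN,False,False,False,True),(CN,False,True,True,True),(CN,True,False,False,False),(CN,True,True,True,False),(CO,False,False,True,False),(CO,False,True,False,False),(CO,True,False,True,True),(CO,True,True,False,True)], set [(CN,False,False,False,True),(CN,False,False,True,True),(CN,False,True,True,True),(CN,True,False,False,False),(CN,True,True,False,False),(CN,True,True,True,False),(CO,False,True,True,False),(CO,True,False,False,True)], set [(CO,False,False,True,False),(CO,False,True,False,False),(CO,False,True,True,False),(CO,True,False,False,True),(CO,True,False,True,True),(CO,True,True,False,True)]), DB),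
 ((set [(CN,False,False,False,True),(CN,False,True,True,True),(CN,True,False,False,False),(CN,True,True,True,False),(CO,False,False,True,False),(CO,False,True,False,False),(CO,True,False,True,True),(CO,True,True,False,True)], set [(CN,False,False,False,True),(CN,False,True,True,True),(CN,True,False,False,False),(CN,True,True,True,False),(CO,False,False,True,False),(CO,False,True,False,False),(CO,False,True,True,False),(CO,True,False,False,True),(CO,True,False,True,True),(CO,True,True,False,True)], set [(CN,False,False,False,True),(CN,False,False,True,True),(CN,False,True,True,True),(CN,True,False,False,False),(CN,True,True,False,False),(CN,True,True,True,False),(CO,False,False,True,False),(CO,False,True,False,False),(CO,False,True,True,False),(CO,True,False,False,True),(CO,True,False,True,True),(CO,True,True,False,True)]), DZ),
 ((set [(CN,False,False,False,True),(CN,False,True,True,True),(CN,True,False,False,False),(CN,True,True,True,False),(CO,False,False,True,False),(CO,False,True,False,False),(CO,True,False,True,True),(CO,True,True,False,True)], set [(CN,False,False,False,True),(CN,False,True,True,True),(CN,True,False,False,False),(CN,True,True,True,False),(CO,False,False,True,False),(CO,False,True,False,False),(CO,False,True,True,False),(CO,True,False,False,True),(CO,True,False,True,True),(CO,True,True,False,True)], set [(CN,False,False,True,True),(CN,True,True,False,False),(CO,False,False,True,False),(CO,False,True,False,False),(CO,False,True,True,False),(CO,True,False,False,True),(CO,True,False,True,True),(CO,True,True,False,True)]), DB),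
 ((set [(CN,False,False,True,True),(CN,True,True,False,False),(CO,False,False,True,False),(CO,False,True,False,False),(CO,False,True,True,False),(CO,True,False,False,True),(CO,True,False,True,True),(CO,True,True,False,True)], set [(CN,False,False,False,True),(CN,False,True,True,True),(CN,True,False,False,False),(CN,True,True,True,False),(CO,False,False,True,False),(CO,False,True,False,False),(CO,True,False,True,True),(CO,True,True,False,True)], set [(CN,False,False,False,True),(CN,False,False,True,True),(CN,False,True,True,True),(CN,True,False,False,False),(CN,True,True,False,False),(CN,True,True,True,False),(CO,False,True,True,False),(CO,True,False,False,True)]), DA),
 ((set [(CO,False,False,True,False),(CO,False,True,False,False),(CO,False,True,True,False),(CO,True,False,False,True),(CO,True,False,True,True),(CO,True,True,False,True)], set [(CN,False,False,False,True),(CN,False,True,True,True),(CN,True,False,False,False),(CN,True,True,True,False),(CO,False,False,True,False),(CO,False,True,False,False),(CO,True,False,True,True),(CO,True,True,False,True)], set [(CN,False,False,False,True),(CN,False,True,True,True),(CN,True,False,False,False),(CN,True,True,True,False),(CO,False,False,True,False),(CO,False,True,False,False),(CO,False,True,True,False),(CO,True,False,False,True),(CO,True,False,True,True),(CO,True,True,False,True)]), DF)]"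

lemma RR_closed: "\<forall>(s,d)\<in>set RR. (tr0 s, dstep d 0) \<in> set RR \<and> (tr1 s, dstep d 1) \<in> set RR"
  unfolding RR_def by code_simp

lemma RR_acc: "\<forall>(s,d)\<in>set RR. (\<exists>x\<in>fst s. fst x = CN) \<longleftrightarrow> d \<noteq> DF"
  unfolding RR_def by code_simp

definition G2e :: "stt set" where
  "G2e = set [(CN,False,True,False,True),(CN,True,False,True,False),(CO,False,False,False,False),(CO,True,True,True,True)]"
definition G3e :: "stt set" where
  "G3e = set [(CN,False,False,False,True),(CN,False,True,True,True),(CN,True,False,False,False),(CN,True,True,True,False),(CO,False,True,True,False),(CO,True,False,False,True)]"

lemma base2: "((G2e, G3e, fl (fa ` G2e \<union> fd ` G3e)), DB) \<in> set RR"
  unfolding RR_def G2e_def G3e_def by code_simp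

lemma base3: "((G3e, fl (fa ` G2e \<union> fd ` G3e), fl (fb ` G3e \<union> fc ` G3e)), DC) \<in> set RR"
  unfolding RR_def G2e_def G3e_def by code_simp


definition Fs :: "nat \<Rightarrow> stt set" where "Fs n = range (\<lambda>i. st i n)"
definition G :: "nat \<Rightarrow> stt set" where "G n = fl (Fs n)"
definition S :: "nat \<Rightarrow> stt set \<times> stt set \<times> stt set" where "S n = (G n, G (n+1), G (n+2))"

lemma Fs_even: "2 \<le> m \<Longrightarrow> Fs (2*m) = fa ` Fs m \<union> fd ` Fs (m+1)"
proof (rule set_eqI)
  fix s assume m: "2 \<le> m"
  show "s \<in> Fs (2*m) \<longleftrightarrow> s \<in> fa ` Fs m \<union> fd ` Fs (m+1)"
  proof
    assume "s \<in> Fs (2*m)"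
    then obtain i where i: "s = st i (2*m)" unfolding Fs_def by blast
    show "s \<in> fa ` Fs m \<union> fd ` Fs (m+1)"
    proof (cases "even i")
      case True
      then obtain q where "i = 2*q" by blast
      then have "s = fa (st q m)" using i st_a[OF m] by simp
      then show ?thesis unfolding Fs_def by blast
    next
      case False
      then obtain q where "i = 2*q+1" by (metis oddE)
      then have "s = fd (st q (m+1))" using i st_d[OF m] by simp
      then show ?thesis unfolding Fs_def by blast
    qed
  next
    assume "s \<in> fa ` Fs m \<union> fd ` Fs (m+1)"
    then show "s \<in> Fs (2*m)"
    proof
      assume "s \<in> fa ` Fs m"
      then obtain q where "s = fa (st q m)" unfolding Fs_def by blast
      then have "s = st (2*q) (2*m)" using st_a[OF m] by simp
      then show ?thesis unfolding Fs_def by blast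
    next
      assume "s \<in> fd ` Fs (m+1)"
      then obtain q where "s = fd (st q (m+1))" unfolding Fs_def by blast
      then have "s = st (2*q+1) (2*m)" using st_d[OF m] by simp
      then show ?thesis unfolding Fs_def by blast
    qed
  qed
qed

lemma Fs_odd: "2 \<le> m \<Longrightarrow> Fs (2*m+1) = fb ` Fs (m+1) \<union> fc ` Fs (m+1)"
proof (rule set_eqI)
  fix s assume m: "2 \<le> m"
  show "s \<in> Fs (2*m+1) \<longleftrightarrow> s \<in> fb ` Fs (m+1) \<union> fc ` Fs (m+1)"
  proof
    assume "s \<in> Fs (2*m+1)"
    then obtain i where i: "s = st i (2*m+1)" unfolding Fs_def by blast
    show "s \<in> fb ` Fs (m+1) \<union> fc ` Fs (m+1)"
    proof (cases "even i")
      case True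
      then obtain q where "i = 2*q" by blast
      then have "s = fb (st q (m+1))" using i st_b[OF m] by simp
      then show ?thesis unfolding Fs_def by blast
    next
      case False
      then obtain q where "i = 2*q+1" by (metis oddE)
      then have "s = fc (st q (m+1))" using i st_c[OF m] by simp
      then show ?thesis unfolding Fs_def by blast
    qed
  next
    assume "s \<in> fb ` Fs (m+1) \<union> fc ` Fs (m+1)"
    then show "s \<in> Fs (2*m+1)"
    proof
      assume "s \<in> fb ` Fs (m+1)"
      then obtain q where "s = fb (st q (m+1))" unfolding Fs_def by blast
      then have "s = st (2*q) (2*m+1)" using st_b[OF m] by simp
      then show ?thesis unfolding Fs_def by blast
    next
      assume "s \<in> fc ` Fs (m+1)"
      then obtain q where "s = fc (st q (m+1))" unfolding Fs_def by blast
      then have "s = st (2*q+1) (2*m+1)" using st_c[OF m] by simp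
      then show ?thesis unfolding Fs_def by blast
    qed
  qed
qed

lemma fl_img:
  assumes "\<And>s. fst s = CX \<Longrightarrow> fst (f s) = CX"
  shows "fl (f ` A) = fl (f ` fl A)"
  unfolding fl_def using assms by auto

lemma fl_Un: "fl (A \<union> B) = fl A \<union> fl B" unfolding fl_def by auto

lemma pres_a: "fst s = CX \<Longrightarrow> fst (fa s) = CX" by (cases s) auto
lemma pres_b: "fst s = CX \<Longrightarrow> fst (fb s) = CX" by (cases s) auto
lemma pres_c: "fst s = CX \<Longrightarrow> fst (fc s) = CX" by (cases s) auto
lemma pres_d: "fst s = CX \<Longrightarrow> fst (fd s) = CX" by (cases s) auto

lemma G_even: "2 \<le> m \<Longrightarrow> G (2*m) = fl (fa ` G m \<union> fd ` G (m+1))"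
  unfolding G_def Fs_even fl_Un
  using fl_img[of fa, OF pres_a] fl_img[of fd, OF pres_d] by simp

lemma G_odd: "2 \<le> m \<Longrightarrow> G (2*m+1) = fl (fb ` G (m+1) \<union> fc ` G (m+1))"
  unfolding G_def Fs_odd fl_Un
  using fl_img[of fb, OF pres_b] fl_img[of fc, OF pres_c] by simp

lemma S_even: "2 \<le> n \<Longrightarrow> S (2*n) = tr0 (S n)"
proof -
  assume n: "2 \<le> n"
  have "G (2*n+2) = G (2*(n+1))" by (simp add: algebra_simps)
  then show ?thesis unfolding S_def using G_even[OF n] G_odd[OF n] G_even[of "n+1"] n
    by (simp add: algebra_simps)
qed

lemma S_odd: "2 \<le> n \<Longrightarrow> S (2*n+1) = tr1 (S n)"
proof -
  assume n: "2 \<le> n"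
  have "G (2*n+1+1) = G (2*(n+1))" "G (2*n+1+2) = G (2*(n+1)+1)" by (simp_all add: algebra_simps)
  then show ?thesis unfolding S_def using G_even[of "n+1"] G_odd[OF n] G_odd[of "n+1"] n
    by (simp add: algebra_simps)
qed


lemma tbv: "\<not> tb 0" "tb 1" "tb 2" "\<not> tb 3" "tb 4" "\<not> tb 5" "\<not> tb 6" "tb 7"
proof -
  have t0: "\<not> tb 0" by (simp add: tb_def thue_morse_def bin.simps)
  have t1: "tb 1" using tb_odd[of 0] t0 by simp
  have t2: "tb 2" using tb_even[of 1] t1 by simp
  have t3: "\<not> tb 3" using tb_odd[of 1] t1 by (simp add: numeral_3_eq_3)
  have t4: "tb 4" using tb_even[of 2] t2 by simp
  have t5: "\<not> tb 5" using tb_odd[of 2] t2 by (simp add: eval_nat_numeral)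
  have t6: "\<not> tb 6" using tb_even[of 3] t3 by simp
  have t7: "tb 7" using tb_odd[of 3] t3 by (simp add: eval_nat_numeral)
  show "\<not> tb 0" "tb 1" "tb 2" "\<not> tb 3" "tb 4" "\<not> tb 5" "\<not> tb 6" "tb 7" by fact+
qed

lemma tbv': "tb (Suc (Suc 0))" "\<not> tb (Suc (Suc (Suc 0)))"
  using tbv by (simp_all add: numeral_2_eq_2 numeral_3_eq_3)

lemma st2: "st i 2 = (if tb i = tb (i+1) then CO else CN, tb i, tb (i+1), tb i, tb (i+1))"
proof -
  have "Bs i 2 = (if tb i = tb (i+1) then {1} else {})"
  proof (rule set_eqI)
    fix k
    have "k \<in> Bs i 2 \<longleftrightarrow> k = 1 \<and> brd i 2 1" unfolding Bs_def by (cases "k = 1") auto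
    then show "k \<in> Bs i 2 \<longleftrightarrow> k \<in> (if tb i = tb (i+1) then {1} else {})"
      using brd1[of 2 i] by auto
  qed
  then show ?thesis unfolding st_def by (simp add: catB_def)
qed

lemma st3: "st i 3 = (if tb i = tb (i+2) then CO else CN, tb i, tb (i+1), tb (i+1), tb (i+2))"
proof -
  have "Bs i 3 = (if tb i = tb (i+2) then {1} else {})"
  proof (rule set_eqI)
    fix k
    have "k \<in> Bs i 3 \<longleftrightarrow> (k = 1 \<and> brd i 3 1) \<or> (k = 2 \<and> brd i 3 2)" unfolding Bs_def
      by (cases "k = 1"; cases "k = 2") auto
    moreover have "\<not> brd i 3 2" using brd2[of 3 i] no_three[of i] by auto
    moreover have "brd i 3 1 \<longleftrightarrow> tb i = tb (i+2)" using brd1[of 3 i] by simp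
    ultimately show "k \<in> Bs i 3 \<longleftrightarrow> k \<in> (if tb i = tb (i+2) then {1} else {})"
      by auto
  qed
  moreover have "i + 3 - 2 = i + 1" "i + 3 - 1 = i + 2" by simp_all
  ultimately show ?thesis unfolding st_def by (simp add: catB_def)
qed

lemma G2: "G 2 = G2e"
proof -
  have "Fs 2 = G2e"
  proof
    show "Fs 2 \<subseteq> G2e"
    proof
      fix s assume "s \<in> Fs 2"
      then obtain i where "s = st i 2" unfolding Fs_def by blast
      then show "s \<in> G2e" unfolding st2 G2e_def by (cases "tb i"; cases "tb (i+1)") auto
    qed
    have "st 0 2 = (CN,False,True,False,True)" "st 2 2 = (CN,True,False,True,False)"
      "st 5 2 = (CO,False,False,False,False)" "st 1 2 = (CO,True,True,True,True)"
      unfolding st2 using tbv tbv' by simp_all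
    moreover have r: "\<And>i. st i 2 \<in> Fs 2" unfolding Fs_def by blast
    ultimately show "G2e \<subseteq> Fs 2" unfolding G2e_def using r[of 0] r[of 2] r[of 5] r[of 1] by simp
  qed
  moreover have "fl G2e = G2e" unfolding fl_def G2e_def by auto
  ultimately show ?thesis unfolding G_def by simp
qed

lemma G3: "G 3 = G3e"
proof -
  have "Fs 3 = G3e"
  proof
    show "Fs 3 \<subseteq> G3e"
    proof
      fix s assume "s \<in> Fs 3"
      then obtain i where "s = st i 3" unfolding Fs_def by blast
      then show "s \<in> G3e" unfolding st3 G3e_def using no_three[of i]
        by (cases "tb i"; cases "tb (i+1)"; cases "tb (i+2)") auto
    qed
    have "st 5 3 = (CN,False,False,False,True)" "st 0 3 = (CN,False,True,True,True)"
      "st 4 3 = (CN,True,False,False,False)" "st 1 3 = (CN,True,True,True,False)"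
      "st 3 3 = (CO,False,True,True,False)" "st 2 3 = (CO,True,False,False,True)"
      unfolding st3 using tbv tbv' by simp_all
    moreover have r: "\<And>i. st i 3 \<in> Fs 3" unfolding Fs_def by blast
    ultimately show "G3e \<subseteq> Fs 3" unfolding G3e_def using r[of 0] r[of 1] r[of 2] r[of 3] r[of 4] r[of 5] by simp
  qed
  moreover have "fl G3e = G3e" unfolding fl_def G3e_def by auto
  ultimately show ?thesis unfolding G_def by simp
qed

lemma bin_snoc: "bin (2*n + b) = bin n @ [b]" if "b < 2" "0 < 2*n + b"
  using bin_pos[OF that(2)] that by simp

lemma drun_bin: "0 < 2*n+b \<Longrightarrow> b < 2 \<Longrightarrow> drun (bin (2*n+b)) = dstep (drun (bin n)) b"
  using bin_snoc drun_snoc by simp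

lemma inv: "2 \<le> n \<Longrightarrow> (S n, drun (bin n)) \<in> set RR"
proof (induction n rule: less_induct)
  case (less n)
  show ?case
  proof (cases "n < 4")
    case True
    then have "n = 2 \<or> n = 3" using less.prems by auto
    then show ?thesis
    proof
      assume n: "n = 2"
      have "S 2 = (G2e, G3e, fl (fa ` G2e \<union> fd ` G3e))"
        unfolding S_def using G2 G3 G_even[of 2] by simp
      moreover have "drun (bin 2) = DB" using drun_bin[of 1 0] drun_bin[of 0 1] by (simp add: bin.simps drun_def)
      ultimately show ?thesis using n base2 by simp
    next
      assume n: "n = 3"
      have "S 3 = (G3e, fl (fa ` G2e \<union> fd ` G3e), fl (fb ` G3e \<union> fc ` G3e))"
        unfolding S_def using G2 G3 G_even[of 2] G_odd[of 2] by simp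
      moreover have "drun (bin 3) = DC" using drun_bin[of 1 1] drun_bin[of 0 1] by (simp add: bin.simps drun_def)
      ultimately show ?thesis using n base3 by simp
    qed
  next
    case False
    define m where "m = n div 2"
    define b where "b = n mod 2"
    have nm: "n = 2*m + b" "b < 2" "2 \<le> m" "m < n" unfolding m_def b_def using False by auto
    have IH: "(S m, drun (bin m)) \<in> set RR" using less.IH[OF nm(4) nm(3)] .
    have D: "drun (bin n) = dstep (drun (bin m)) b" using drun_bin[of m b] nm by simp
    show ?thesis
    proof (cases "b = 0")
      case True
      then have "S n = tr0 (S m)" using S_even[OF nm(3)] nm(1) by simp
      then show ?thesis using RR_closed IH D True by fastforce
    next
      case False
      then have "b = 1" using nm(2) by simp
      then have "S n = tr1 (S m)" using S_odd[OF nm(3)] nm(1) by simp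
      then show ?thesis using RR_closed IH D \<open>b = 1\<close> by fastforce
    qed
  qed
qed


lemma factor_len: "length (factor f i n) = n" by (simp add: factor_def)
lemma factor_nth: "j < n \<Longrightarrow> factor f i n ! j = f (i+j)" by (simp add: factor_def)

lemma bordered_brd: "bordered (factor thue_morse i n) \<longleftrightarrow> (\<exists>k. 0 < k \<and> 2*k \<le> n \<and> brd i n k)"
proof
  let ?w = "factor thue_morse i n"
  assume "bordered ?w"
  then obtain x where x: "0 < length x" "2 * length x \<le> n" "prefix x ?w" "suffix x ?w"
    unfolding bordered_def factor_len by blast
  define k where "k = length x"
  obtain z where z: "?w = x @ z" using x(3) unfolding prefix_def by blast
  obtain z' where z': "?w = z' @ x" using x(4) unfolding suffix_def by blast
  have lz': "length z' = n - k" using arg_cong[OF z', of length] unfolding k_def factor_len by simp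
  have "brd i n k" unfolding brd_def
  proof (intro allI impI)
    fix j assume j: "j < k"
    have "?w ! j = x ! j" using z j unfolding k_def by (simp add: nth_append)
    moreover have "?w ! (n-k+j) = x ! j" using z' lz' j by (simp add: nth_append)
    moreover have "?w ! j = thue_morse (i+j)" using j x(2) unfolding k_def by (simp add: factor_nth)
    moreover have "?w ! (n-k+j) = thue_morse (i+(n-k+j))" using j x(2) unfolding k_def by (simp add: factor_nth)
    ultimately have "thue_morse (i+j) = thue_morse (i+(n-k)+j)" by (simp add: add.assoc)
    then show "tb (i+j) = tb (i+(n-k)+j)" using tm_eq_iff by blast
  qed
  then show "\<exists>k. 0 < k \<and> 2*k \<le> n \<and> brd i n k" using x(1,2) unfolding k_def by blast
next
  let ?w = "factor thue_morse i n"
  assume "\<exists>k. 0 < k \<and> 2*k \<le> n \<and> brd i n k"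
  then obtain k where k: "0 < k" "2*k \<le> n" "brd i n k" by blast
  have "drop (n-k) ?w = take k ?w"
  proof (rule nth_equalityI)
    show "length (drop (n-k) ?w) = length (take k ?w)" using k by (simp add: factor_len)
    fix j assume "j < length (drop (n-k) ?w)"
    then have j: "j < k" using k by (simp add: factor_len)
    have "drop (n-k) ?w ! j = thue_morse (i+(n-k+j))" using j k by (simp add: factor_len factor_nth)
    moreover have "take k ?w ! j = thue_morse (i+j)" using j k by (simp add: factor_nth)
    moreover have "tb (i+j) = tb (i+(n-k)+j)" using k(3) j unfolding brd_def by blast
    ultimately show "drop (n-k) ?w ! j = take k ?w ! j" using tm_eq_iff by (simp add: add.assoc)
  qed
  then have "suffix (take k ?w) ?w" unfolding suffix_def by (metis append_take_drop_id)
  moreover have "prefix (take k ?w) ?w" by (rule take_is_prefix)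
  moreover have "length (take k ?w) = k" using k by (simp add: factor_len)
  ultimately show "bordered ?w" unfolding bordered_def factor_len using k by metis
qed

lemma half: "brd i n k \<Longrightarrow> 0 < k \<Longrightarrow> k < n \<Longrightarrow> \<exists>k'. 0 < k' \<and> 2*k' \<le> n \<and> brd i n k'"
proof (induction k rule: less_induct)
  case (less k)
  show ?case
  proof (cases "2*k \<le> n")
    case True then show ?thesis using less.prems by blast
  next
    case False
    define p where "p = n - k"
    have pk: "p < k" "0 < p" using False less.prems unfolding p_def by auto
    have b: "tb (i+j) = tb (i+p+j)" if "j < k" for j using less.prems(1) that unfolding brd_def p_def by blast
    have "brd i n (k-p)" unfolding brd_def
    proof (intro allI impI)
      fix j assume j: "j < k - p"
      have "tb (i+j) = tb (i+p+j)" using b j by simp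
      also have "\<dots> = tb (i+p+(p+j))" using b[of "p+j"] j by (simp add: add.assoc)
      also have "i+p+(p+j) = i + (n-(k-p)) + j" using pk less.prems unfolding p_def by simp
      finally show "tb (i+j) = tb (i + (n-(k-p)) + j)" .
    qed
    moreover have "k - p < k" "0 < k - p" "k - p < n" using pk less.prems by auto
    ultimately show ?thesis using less.IH by blast
  qed
qed

lemma unb_iff: "unbordered (factor thue_morse i n) \<longleftrightarrow> Bs i n = {}"
proof -
  have "(\<exists>k. 0 < k \<and> 2*k \<le> n \<and> brd i n k) \<longleftrightarrow> (\<exists>k. 0 < k \<and> k < n \<and> brd i n k)"
    using half by (metis less_le_trans mult_2 add_less_mono1 less_add_same_cancel1 nat_less_le)
  then show ?thesis unfolding unbordered_def bordered_brd Bs_def by auto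
qed

theorem theorem4:
  fixes n :: nat
  shows "(\<exists>i. unbordered (factor thue_morse i n)) \<longleftrightarrow> bin n \<notin> L_exc"
proof (cases "n < 2")
  case True
  then have "Bs 0 n = {}" unfolding Bs_def by auto
  then have l: "\<exists>i. unbordered (factor thue_morse i n)" using unb_iff by blast
  have "n = 0 \<or> n = 1" using True by auto
  then have "drun (bin n) \<noteq> DF"
  proof
    assume "n = 0" then show ?thesis by (simp add: bin.simps drun_def)
  next
    assume "n = 1" then show ?thesis using drun_bin[of 0 1] by (simp add: bin.simps drun_def)
  qed
  then show ?thesis using l L_iff_run by blast
next
  case False
  then have n: "2 \<le> n" by simp
  have "(\<exists>i. Bs i n = {}) \<longleftrightarrow> (\<exists>x\<in>G n. fst x = CN)"
  proof
    assume "\<exists>i. Bs i n = {}"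
    then obtain i where "Bs i n = {}" by blast
    then have "fst (st i n) = CN" unfolding st_def by (simp add: catB_def)
    moreover have "st i n \<in> Fs n" unfolding Fs_def by blast
    ultimately have "st i n \<in> G n" unfolding G_def fl_def by simp
    then show "\<exists>x\<in>G n. fst x = CN" using \<open>fst (st i n) = CN\<close> by blast
  next
    assume "\<exists>x\<in>G n. fst x = CN"
    then obtain i where "fst (st i n) = CN" unfolding G_def fl_def Fs_def by blast
    then show "\<exists>i. Bs i n = {}" unfolding st_def catB_def by (auto split: if_splits)
  qed
  moreover have "(\<exists>x\<in>G n. fst x = CN) \<longleftrightarrow> drun (bin n) \<noteq> DF"
    using RR_acc inv[OF n] unfolding S_def by fastforce
  ultimately show ?thesis using unb_iff L_iff_run by blast
qed


end
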